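(* Let $N>0$ be an integer and $z$ a nonzero complex number (or indeterminate). Let $X,Y,Z$ be formal variables and let $\alpha,\beta$ satisfy $\alpha+\beta=X+Y$, $\alpha\beta=Z$. Then, as formal power series in $X,Y,Z$, \[ \Phi_0^{(N)}(X,Y,Z;z)=\frac{1}{Z-XY} \left\{{}_{2}F_{1}^{(N)}\left(\begin{matrix}\alpha-X,\beta-X\\ 1-X\end{matrix};z\right)-1\right\}, \] where the right-hand side is understood as follows: each term with $m\ge1$ of ${}_{2}F_{1}^{(N)}$ contains the factor $(\alpha-X)(\beta-X)=Z-XY$, so the division is exact, the result is symmetric in $\alpha,\beta$ and hence expressible in $X,Y,Z$, and $1/(1-X)_m$ is expanded as a power series in $X$.
   Context: $(x)_m=x(x+1)\cdots(x+m-1)$ is the rising factorial, $(x)_0=1$. For integers $N>0$, define \[ {}_{2}F_{1}^{(N)}\left(\begin{matrix}a,b\\ c\end{matrix};z\right)=\sum_{m=0}^{N-1}\frac{(a)_m(b)_m}{(c)_m\, m!}\,\frac{(N-m)_m}{(Nz^{-1}-m)_m}. \] For ${\boldsymbol{k}}=(k_1,\ldots,k_r)\in\mathbb{Z}_{>0}^r$ define the truncated multiple polylogarithm \[ \mathrm{Li}_{\boldsymbol{k}}^{(N)}(z)=\sum_{0<m_1<\cdots<m_r<N}\frac{1}{m_1^{k_1}\cdots m_r^{k_r}}\frac{(N-m_r)_{m_r}}{(Nz^{-1}-m_r)_{m_r}}. \] For integers $k,r,h>0$ let $I_0(k,r,h)$ be the set of $(k_1,\ldots,k_r)\in\mathbb{Z}_{>0}^r$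 with $k_r>1$, $k_1+\cdots+k_r=k$ and $\#\{i\mid k_i>1\}=h$ (a finite set). Put $G_0^{(N)}(k,r,h;z)=\sum_{{\boldsymbol{k}}\in I_0(k,r,h)}\mathrm{Li}^{(N)}_{\boldsymbol{k}}(z)$ and \[ \Phi_0^{(N)}(X,Y,Z;z)=\sum_{k,r,h>0}G^{(N)}_0(k,r,h;z)\,X^{k-r-h}Y^{r-h}Z^{h-1}. \] *)

theory Defs
  imports "HOL-Computational_Algebra.Formal_Power_Series"
begin

text \<open>Formal power series in three variables X, Y, Z over the complex numbers,
  realised as nested one-variable series: the innermost variable is X, then Y,
  the outermost is Z.  The coefficient of X^a Y^b Z^c of f is
  fps_nth (fps_nth (fps_nth f c) b) a.\<close>

type_synonym mps = "complex fps fps fps"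

definition mX :: mps where "mX = fps_const (fps_const fps_X)"
definition mY :: mps where "mY = fps_const fps_X"
definition mZ :: mps where "mZ = fps_X"

definition embX :: "complex fps \<Rightarrow> mps" where "embX f = fps_const (fps_const f)"

definition cfac :: "nat \<Rightarrow> nat \<Rightarrow> complex \<Rightarrow> complex" where
  "cfac N m z = pochhammer (of_nat N - of_nat m) m / pochhammer (of_nat N / z - of_nat m) m"

definition LiN :: "nat \<Rightarrow> nat list \<Rightarrow> complex \<Rightarrow> complex" where
  "LiN N ks z = (\<Sum>ms\<in>{ms. length ms = length ks \<and> sorted_wrt (<) ms \<and> set ms \<subseteq> {0<..<N}}.
       (\<Prod>i<length ks. 1 / (of_nat (ms!i) ^ (ks!i))) * cfac N (last ms) z)"

definition I0 :: "nat \<Rightarrow> nat \<Rightarrow> nat \<Rightarrow> nat list set" where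
  "I0 k r h = {ks. length ks = r \<and> (\<forall>i<r. ks!i > 0) \<and> ks!(r-1) > 1 \<and> sum_list ks = k
                  \<and> card {i. i < r \<and> ks!i > 1} = h}"

definition G0 :: "nat \<Rightarrow> nat \<Rightarrow> nat \<Rightarrow> nat \<Rightarrow> complex \<Rightarrow> complex" where
  "G0 N k r h z = (\<Sum>ks\<in>I0 k r h. LiN N ks z)"

definition Phi0 :: "nat \<Rightarrow> complex \<Rightarrow> mps" where
  "Phi0 N z = Abs_fps (\<lambda>c. Abs_fps (\<lambda>b. Abs_fps (\<lambda>a.
      \<Sum>(k,r,h)\<in>{(k,r,h). k > 0 \<and> r > 0 \<and> h > 0 \<and> int k - int r - int h = int a
                  \<and> int r - int h = int b \<and> int h - 1 = int c}. G0 N k r h z)))"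

text \<open>With \<alpha> + \<beta> = X+Y and \<alpha>\<beta> = Z one has
  (\<alpha>-X)_m (\<beta>-X)_m = \<Prod>j<m. (\<alpha>-X+j)(\<beta>-X+j)
                    = \<Prod>j<m. (\<alpha>\<beta> + (j-X)(\<alpha>+\<beta>) + (j-X)^2).
  This is the symmetric expression written in terms of e1 = X+Y and e2 = Z.\<close>
definition ab_poch :: "nat \<Rightarrow> mps" where
  "ab_poch m = (\<Prod>j<m. mZ + (of_nat j - mX) * (mX + mY) + (of_nat j - mX)^2)"

text \<open>The truncated hypergeometric sum 2F1^{(N)}(\<alpha>-X, \<beta>-X; 1-X; z), with
  1/(1-X)_m expanded as a power series in X.\<close>
definition F21N :: "nat \<Rightarrow> complex \<Rightarrow> mps" where
  "F21N N z = (\<Sum>m<N. ab_poch m *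
      embX (inverse (pochhammer (1 - fps_X) m * fps_const (fact m)) * fps_const (cfac N m z)))"

end

theory Submission
  imports Defs
begin

unbundle fps_syntax


abbreviation K3 :: "complex \<Rightarrow> mps" where "K3 d \<equiv> fps_const (fps_const (fps_const d))"

lemma embX_mult: "embX (f * g) = embX f * embX g" by (simp add: embX_def)
lemma embX_add: "embX (f + g) = embX f + embX g" by (simp add: embX_def)
lemma embX_diff: "embX (f - g) = embX f - embX g" by (simp add: embX_def)
lemma embX_1: "embX 1 = 1" by (simp add: embX_def)
lemma embX_const: "embX (fps_const d) = K3 d" by (simp add: embX_def)
lemma embX_X: "embX fps_X = mX" by (simp add: embX_def mX_def)
lemma embX_prod: "embX (prod f A) = prod (\<lambda>i. embX (f i)) A"
  by (induction A rule: infinite_finite_induct) (auto simp: embX_1 embX_mult)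
lemma embX_of_nat: "embX (of_nat n) = of_nat n"
  by (simp add: embX_def flip: fps_of_nat)
lemma K3_of_nat: "K3 (of_nat n) = of_nat n"
  by (simp flip: fps_of_nat)

definition ej :: "nat \<Rightarrow> complex fps" where "ej j = Abs_fps (\<lambda>n. 1 / of_nat j ^ (n+2))"
definition dj :: "nat \<Rightarrow> complex fps" where "dj j = fps_const (of_nat j) * (fps_const (of_nat j) - fps_X)"

lemma ej_dj: assumes "j > 0" shows "ej j * dj j = 1"
proof -
  define f :: "complex fps" where "f = Abs_fps (\<lambda>n. 1 / of_nat j ^ (n+1))"
  have "(fps_const (of_nat j) - fps_X) * f = 1"
  proof (rule fps_ext)
    fix n show "((fps_const (of_nat j) - fps_X) * f) $ n = (1::complex fps) $ n"
      using assms by (cases n) (auto simp: f_def algebra_simps)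
  qed
  moreover have "ej j = fps_const (1 / of_nat j) * f"
    by (rule fps_ext) (simp add: ej_def f_def)
  ultimately show ?thesis using assms
    by (simp add: dj_def algebra_simps)
qed

definition wj :: "nat \<Rightarrow> mps" where "wj j = mY * K3 (1 / of_nat j) + mZ * embX (ej j)"
definition Qm :: "nat \<Rightarrow> mps" where "Qm m = (\<Prod>j\<in>{0<..<m}. 1 + wj j)"
definition Pj :: "nat \<Rightarrow> mps" where "Pj j = mZ + (of_nat j - mX) * (mX + mY) + (of_nat j - mX)^2"

lemma one_w_d: assumes "j > 0" shows "(1 + wj j) * embX (dj j) = Pj j"
proof -
  have e: "embX (ej j) * embX (dj j) = 1" using ej_dj[OF assms] by (simp flip: embX_mult add: embX_1)
  have k: "K3 (1 / of_nat j) * of_nat j = 1" using assms by (simp flip: fps_of_nat)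
  have d: "embX (dj j) = of_nat j * (of_nat j - mX)"
    by (simp add: dj_def embX_mult embX_diff embX_X embX_const flip: fps_of_nat)
  have r: "\<And>y c z a D :: mps. (1 + (y*c + z*a))*D = D + y*(c*D) + z*(a*D)" by (simp add: algebra_simps)
  have cd: "K3 (1 / of_nat j) * embX (dj j) = of_nat j - mX" unfolding d mult.assoc[symmetric] k by simp
  have "(1 + wj j) * embX (dj j) = embX (dj j) + mY * (of_nat j - mX) + mZ"
    unfolding wj_def r cd e by simp
  also have "\<dots> = Pj j" unfolding d Pj_def by (simp add: algebra_simps power2_eq_square)
  finally show ?thesis .
qed

lemma poch_fact: "pochhammer (1 - fps_X :: complex fps) m * fps_const (fact m) = (\<Prod>j\<in>{0<..m}. dj j)"
proof (induction m)
  case 0 then show ?case by simp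
next
  case (Suc m)
  have ins: "{0<..Suc m} = insert (Suc m) {0<..m}" by auto
  have "pochhammer (1 - fps_X :: complex fps) (Suc m) * fps_const (fact (Suc m))
      = (pochhammer (1 - fps_X) m * fps_const (fact m)) * ((1 - fps_X + of_nat m) * of_nat (Suc m))"
  proof -
    have fq: "fps_const (fact (Suc m) :: complex) = fps_const (fact m) * of_nat (Suc m)"
      by (metis fact_Suc fps_const_mult fps_of_nat mult.commute of_nat_fact)
    show ?thesis unfolding pochhammer_Suc fq by (simp only: mult_ac)
  qed
  also have "(1 - fps_X + of_nat m) * of_nat (Suc m) = dj (Suc m)"
    by (simp add: dj_def algebra_simps flip: fps_of_nat)
  finally show ?case using Suc by (simp add: ins mult.commute)
qed

lemma prod_dj_0: "(\<Prod>j\<in>A. dj j) $ 0 = (\<Prod>j\<in>A. of_nat j * of_nat j)"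
  by (induction A rule: infinite_finite_induct) (auto simp: dj_def)

lemma alg_main: assumes "m > 0"
  shows "(mZ - mX * mY) * (Qm m * embX (ej m))
       = ab_poch m * embX (inverse (pochhammer (1 - fps_X) m * fps_const (fact m)))"
proof -
  define g :: "complex fps" where "g = pochhammer (1 - fps_X) m * fps_const (fact m)"
  define h where "h = (\<Prod>j\<in>{0<..<m}. dj j)"
  have ins: "{0<..m} = insert m {0<..<m}" using assms by auto
  have g: "g = dj m * h" unfolding g_def h_def poch_fact ins by simp
  have g0: "g $ 0 \<noteq> 0" unfolding g_def poch_fact prod_dj_0 by simp
  have "h * inverse g = ej m * g * inverse g"
    using ej_dj[OF assms] unfolding g by (simp add: algebra_simps)
  also have "\<dots> = ej m" using inverse_mult_eq_1'[OF g0] by (simp add: mult.assoc)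
  finally have hg: "h * inverse g = ej m" .
  have ins0: "{..<m} = insert 0 {0<..<m}" using assms by auto
  have P0: "Pj 0 = mZ - mX * mY" by (simp add: Pj_def algebra_simps power2_eq_square)
  have ab: "ab_poch m = Pj 0 * (\<Prod>j\<in>{0<..<m}. Pj j)"
    unfolding ab_poch_def ins0 by (simp add: Pj_def)
  have "(\<Prod>j\<in>{0<..<m}. Pj j) = (\<Prod>j\<in>{0<..<m}. (1 + wj j) * embX (dj j))"
    by (rule prod.cong) (auto simp: one_w_d)
  also have "\<dots> = Qm m * embX h" by (simp add: Qm_def h_def prod.distrib embX_prod)
  finally have "ab_poch m * embX (inverse g) = (mZ - mX * mY) * (Qm m * embX (h * inverse g))"
    unfolding ab P0 by (simp add: embX_mult algebra_simps)
  then have "ab_poch m * embX (inverse g) = (mZ - mX * mY) * (Qm m * embX (ej m))" unfolding hg .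
  then show ?thesis by (simp add: g_def)
qed



definition hc :: "nat list \<Rightarrow> nat" where "hc ks = length (filter (\<lambda>k. 1 < k) ks)"

lemma hc_app: "hc (ks @ [k]) = hc ks + (if 1 < k then 1 else 0)" by (simp add: hc_def)
lemma hc_le: "hc ks \<le> length ks" by (simp add: hc_def)
lemma sum_ge: "\<forall>k\<in>set ks. 0 < k \<Longrightarrow> length ks + hc ks \<le> sum_list ks"
  by (induction ks) (auto simp: hc_def)

definition V :: "nat \<Rightarrow> (nat list \<times> nat list) set" where
  "V M = {(ks,ms). length ks = length ms \<and> sorted_wrt (<) ms \<and> set ms \<subseteq> {0<..<M} \<and> (\<forall>k\<in>set ks. 0<k)}"

definition Sset :: "nat \<Rightarrow> nat \<Rightarrow> nat \<Rightarrow> nat \<Rightarrow> (nat list \<times> nat list) set" where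
  "Sset m a b c = {p\<in>V m. length (fst p) = b + c \<and> hc (fst p) = c \<and> sum_list (fst p) = a + b + 2*c}"

definition wt :: "nat list \<times> nat list \<Rightarrow> complex" where
  "wt p = (\<Prod>i<length (fst p). 1 / (of_nat (snd p ! i) ^ (fst p ! i)))"

lemma wt_app: assumes "length ks = length ms"
  shows "wt (ks @ [k], ms @ [j]) = wt (ks, ms) * (1 / of_nat j ^ k)"
proof -
  have "(\<Prod>i<length ks. 1 / (of_nat ((ms@[j]) ! i) ^ ((ks@[k]) ! i)) :: complex)
      = (\<Prod>i<length ks. 1 / (of_nat (ms ! i) ^ (ks ! i)))"
    by (rule prod.cong) (auto simp: nth_append assms)
  then show ?thesis unfolding wt_def by (simp add: assms nth_append)
qed

lemma app_V: assumes "length ks = length ms"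
  shows "(ks @ [k], ms @ [j]) \<in> V M \<longleftrightarrow> (ks, ms) \<in> V j \<and> 0 < k \<and> 0 < j \<and> j < M"
proof
  assume h: "(ks @ [k], ms @ [j]) \<in> V M"
  then have s: "sorted_wrt (<) (ms @ [j])" and st: "set (ms @ [j]) \<subseteq> {0<..<M}"
    by (auto simp: V_def)
  from s have "\<forall>x\<in>set ms. x < j" by (simp add: sorted_wrt_append)
  with h s st show "(ks, ms) \<in> V j \<and> 0 < k \<and> 0 < j \<and> j < M"
    by (auto simp: V_def sorted_wrt_append assms)
next
  assume h: "(ks, ms) \<in> V j \<and> 0 < k \<and> 0 < j \<and> j < M"
  then show "(ks @ [k], ms @ [j]) \<in> V M"
    by (auto simp: V_def sorted_wrt_append assms)
qed

lemma V_split: assumes "(ks, ms) \<in> V M" "ks \<noteq> []"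
  obtains ks' ms' k j where "ks = ks' @ [k]" "ms = ms' @ [j]" "length ks' = length ms'"
proof -
  have "length ks = length ms" using assms by (auto simp: V_def)
  then have "ms \<noteq> []" using assms by auto
  then show ?thesis using that[of "butlast ks" "last ks" "butlast ms" "last ms"] assms
    \<open>length ks = length ms\<close> by simp
qed

lemma finite_Sset: "finite (Sset m a b c)"
proof -
  have "Sset m a b c \<subseteq> {ks. set ks \<subseteq> {0..a+b+2*c} \<and> length ks = b+c} \<times> {ms. set ms \<subseteq> {0..<m} \<and> length ms = b+c}"
    by (auto simp: Sset_def V_def dest: member_le_sum_list)
  moreover have "finite ({ks. set ks \<subseteq> {0..a+b+2*c} \<and> length ks = b+c} \<times> {ms. set ms \<subseteq> {0..<m} \<and> length ms = b+c})"
    by (intro finite_cartesian_product finite_lists_length_eq) auto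
  ultimately show ?thesis by (rule finite_subset)
qed

lemma Sset_small: assumes "m \<le> 1"
  shows "Sset m a b c = (if a = 0 \<and> b = 0 \<and> c = 0 then {([],[])} else {})"
proof -
  have e: "{0<..<m} = {}" using assms by auto
  show ?thesis by (auto simp: Sset_def V_def hc_def e)
qed

lemma Sset_Suc: assumes "0 < m"
  shows "Sset (Suc m) a b c = Sset m a b c
    \<union> (if 0 < b then (\<lambda>p. (fst p @ [1], snd p @ [m])) ` Sset m a (b-1) c else {})
    \<union> (if 0 < c then (\<lambda>(i,p). (fst p @ [a-i+2], snd p @ [m])) ` (SIGMA i:{..a}. Sset m i b (c-1)) else {})"
  (is "?L = ?R")
proof (rule equalityI)
  show "?L \<subseteq> ?R"
  proof
    fix p :: "nat list \<times> nat list"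
    obtain ks ms where p: "p = (ks, ms)" by fastforce
    assume pL: "p \<in> ?L"
    show "p \<in> ?R"
    proof (cases "m \<in> set ms")
      case False
      with pL have "p \<in> Sset m a b c" unfolding p Sset_def V_def
        by (auto simp: less_Suc_eq)
      then show ?thesis by simp
    next
      case True
      have V: "(ks, ms) \<in> V (Suc m)" using pL p by (simp add: Sset_def)
      then have "length ks = length ms" by (simp add: V_def)
      with True have "ks \<noteq> []" by auto
      then obtain ks' ms' k j where e: "ks = ks' @ [k]" "ms = ms' @ [j]" "length ks' = length ms'"
        by (rule V_split[OF V])
      have "(ks' @ [k], ms' @ [j]) \<in> V (Suc m)" using V unfolding e(1,2) .
      then have V': "(ks', ms') \<in> V j" and k0: "0 < k" and j: "0 < j" "j < Suc m"
        unfolding app_V[OF e(3)] by auto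
      have "j = m"
      proof (rule ccontr)
        assume "j \<noteq> m"
        then have "m \<in> set ms'" using True e by auto
        then have "m < j" using V' by (auto simp: V_def)
        then show False using j by simp
      qed
      have pos: "\<forall>x\<in>set ks'. 0 < x" using V' by (simp add: V_def)
      have ge: "length ks' + hc ks' \<le> sum_list ks'" using sum_ge[OF pos] .
      have hle: "hc ks' \<le> length ks'" by (rule hc_le)
      have len: "length ks' + 1 = b + c" and hcc: "hc ks' + (if 1 < k then 1 else 0) = c"
        and sm: "sum_list ks' + k = a + b + 2*c"
        using pL e(3) unfolding p e(1,2) Sset_def by (auto simp: hc_app)
      show ?thesis
      proof (cases "k = 1")
        case True
        then have "0 < b" "hc ks' = c" using len hcc hle by auto
        moreover have "(ks', ms') \<in> Sset m a (b-1) c"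
          using V' \<open>j = m\<close> len hcc sm True calculation unfolding Sset_def by auto
        ultimately have "p \<in> (\<lambda>p. (fst p @ [1], snd p @ [m])) ` Sset m a (b-1) c"
          unfolding p e using True \<open>j = m\<close> by (auto intro!: image_eqI[where x="(ks',ms')"])
        then show ?thesis using \<open>0 < b\<close> by simp
      next
        case False
        then have k1: "1 < k" using k0 by simp
        then have c0: "0 < c" and hc': "hc ks' = c - 1" using hcc by auto
        have ka: "k \<le> a + 2" using ge len hc' sm c0 by linarith
        define i where "i = a + 2 - k"
        have ia: "i \<le> a" "a - i + 2 = k" using ka k1 by (auto simp: i_def)
        have "(ks', ms') \<in> Sset m i b (c-1)"
          using V' \<open>j = m\<close> len hc' sm c0 ka unfolding Sset_def i_def by auto
        then have "p \<in> (\<lambda>(i,p). (fst p @ [a-i+2], snd p @ [m])) ` (SIGMA i:{..a}. Sset m i b (c-1))"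
          unfolding p e using ia \<open>j = m\<close> by (auto intro!: image_eqI[where x="(i,(ks',ms'))"])
        then show ?thesis using c0 by simp
      qed
    qed
  qed
next
  have s1: "Sset m a b c \<subseteq> ?L" by (auto simp: Sset_def V_def)
  have s2: "(\<lambda>p. (fst p @ [1], snd p @ [m])) ` Sset m a (b-1) c \<subseteq> ?L" if "0 < b"
  proof (rule image_subsetI)
    fix q assume q0: "q \<in> Sset m a (b-1) c"
    obtain ks' ms' where qe: "q = (ks', ms')" by fastforce
    have q: "(ks', ms') \<in> Sset m a (b-1) c" using q0 qe by simp
    then have l: "length ks' = length ms'" by (simp add: Sset_def V_def)
    have "(ks' @ [1], ms' @ [m]) \<in> V (Suc m)" using app_V[OF l] q assms by (simp add: Sset_def)
    then show "(fst q @ [1], snd q @ [m]) \<in> ?L" using q that unfolding qe Sset_def by (auto simp: hc_app)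
  qed
  have s3: "(\<lambda>(i,p). (fst p @ [a-i+2], snd p @ [m])) ` (SIGMA i:{..a}. Sset m i b (c-1)) \<subseteq> ?L" if "0 < c"
  proof (rule image_subsetI)
    fix x assume x0: "x \<in> (SIGMA i:{..a}. Sset m i b (c-1))"
    obtain i ks' ms' where xe: "x = (i, (ks', ms'))" by (cases x) fastforce
    have q: "(ks', ms') \<in> Sset m i b (c-1)" "i \<le> a" using x0 xe by auto
    then have l: "length ks' = length ms'" by (simp add: Sset_def V_def)
    have "(ks' @ [a-i+2], ms' @ [m]) \<in> V (Suc m)" using app_V[OF l] q assms by (simp add: Sset_def)
    then show "(case x of (i,p) \<Rightarrow> (fst p @ [a-i+2], snd p @ [m])) \<in> ?L"
      using q that unfolding xe Sset_def by (auto simp: hc_app)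
  qed
  show "?R \<subseteq> ?L"
    using s1 s2 s3 by (intro Un_least) auto
qed

definition q :: "nat \<Rightarrow> nat \<Rightarrow> nat \<Rightarrow> nat \<Rightarrow> complex" where
  "q m a b c = sum wt (Sset m a b c)"

lemma Sset_len: "p \<in> Sset m a b c \<Longrightarrow> length (fst p) = length (snd p)"
  by (auto simp: Sset_def V_def)

lemma Sset_notin: "p \<in> Sset m a b c \<Longrightarrow> m \<notin> set (snd p)"
  by (auto simp: Sset_def V_def)

lemma q_Suc: assumes "0 < m"
  shows "q (Suc m) a b c = q m a b c
    + (if 0 < b then q m a (b-1) c / of_nat m else 0)
    + (if 0 < c then (\<Sum>i\<le>a. q m i b (c-1) / of_nat m ^ (a-i+2)) else 0)"
proof -
  define A1 where "A1 = (if 0 < b then (\<lambda>p. (fst p @ [1], snd p @ [m])) ` Sset m a (b-1) c else {})"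
  define A2 where "A2 = (if 0 < c then (\<lambda>(i,p). (fst p @ [a-i+2], snd p @ [m])) ` (SIGMA i:{..a}. Sset m i b (c-1)) else {})"
  have f0: "finite (Sset m a b c)" by (rule finite_Sset)
  have f1: "finite A1" unfolding A1_def using finite_Sset by auto
  have f2: "finite A2" unfolding A2_def using finite_Sset by auto
  have m1: "m \<in> set (snd p)" if "p \<in> A1" for p using that by (auto simp: A1_def split: if_splits)
  have m2: "m \<in> set (snd p)" if "p \<in> A2" for p using that by (auto simp: A2_def split: if_splits)
  have l1: "last (fst p) = 1" if "p \<in> A1" for p using that by (auto simp: A1_def split: if_splits)
  have l2: "last (fst p) \<ge> 2" if "p \<in> A2" for p using that by (auto simp: A2_def split: if_splits)
  have d1: "Sset m a b c \<inter> A1 = {}" using m1 Sset_notin by blast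
  have d2: "(Sset m a b c \<union> A1) \<inter> A2 = {}" using m2 Sset_notin l1 l2
    by (metis Int_emptyI Un_iff numeral_le_one_iff semiring_norm(69))
  have "q (Suc m) a b c = sum wt (Sset m a b c \<union> A1 \<union> A2)"
    unfolding q_def Sset_Suc[OF assms] A1_def A2_def ..
  also have "\<dots> = sum wt (Sset m a b c) + sum wt A1 + sum wt A2"
    using f0 f1 f2 d1 d2 by (simp add: sum.union_disjoint)
  also have "sum wt A1 = (if 0 < b then q m a (b-1) c / of_nat m else 0)"
  proof (cases "0 < b")
    case True
    have inj: "inj_on (\<lambda>p. (fst p @ [1::nat], snd p @ [m])) (Sset m a (b-1) c)"
      by (rule inj_onI) (auto simp: prod_eq_iff)
    have "sum wt A1 = (\<Sum>p\<in>Sset m a (b-1) c. wt (fst p @ [1], snd p @ [m]))"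
      unfolding A1_def if_P[OF True] sum.reindex[OF inj] o_def by (rule refl)
    also have "\<dots> = (\<Sum>p\<in>Sset m a (b-1) c. wt p / of_nat m)"
      by (rule sum.cong) (auto simp: wt_app Sset_len)
    finally show ?thesis using True by (simp add: q_def sum_divide_distrib)
  qed (simp add: A1_def)
  also have "sum wt A2 = (if 0 < c then (\<Sum>i\<le>a. q m i b (c-1) / of_nat m ^ (a-i+2)) else 0)"
  proof (cases "0 < c")
    case True
    have inj: "inj_on (\<lambda>(i,p). (fst p @ [a-i+2], snd p @ [m])) (SIGMA i:{..a}. Sset m i b (c-1))"
      by (rule inj_onI) (auto simp: prod_eq_iff)
    have "sum wt A2 = (\<Sum>(i,p)\<in>(SIGMA i:{..a}. Sset m i b (c-1)). wt (fst p @ [a-i+2], snd p @ [m]))"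
      unfolding A2_def if_P[OF True] sum.reindex[OF inj] o_def by (simp add: case_prod_unfold)
    also have "\<dots> = (\<Sum>i\<le>a. \<Sum>p\<in>Sset m i b (c-1). wt (fst p @ [a-i+2], snd p @ [m]))"
      by (rule sum.Sigma[symmetric]) (auto simp: finite_Sset)
    also have "\<dots> = (\<Sum>i\<le>a. \<Sum>p\<in>Sset m i b (c-1). wt p / of_nat m ^ (a-i+2))"
      by (intro sum.cong refl) (auto simp: wt_app Sset_len)
    finally show ?thesis using True by (simp add: q_def sum_divide_distrib)
  qed (simp add: A2_def)
  finally show ?thesis unfolding q_def .
qed



lemma coeff_Y: "(F * (mY * K3 d)) $ c $ b $ a = (if b = 0 then 0 else F $ c $ (b-1) $ a * d)"
proof -
  have e1: "F * (mY * K3 d) = F * fps_const (fps_X * fps_const (fps_const d))"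
    by (simp add: mY_def)
  have "(F * (mY * K3 d)) $ c = F $ c * (fps_X * fps_const (fps_const d))"
    unfolding e1 by (rule fps_mult_right_const_nth)
  also have "\<dots> = (fps_X * F $ c) * fps_const (fps_const d)" by (simp add: mult_ac)
  finally have "(F * (mY * K3 d)) $ c $ b $ a = ((fps_X * F $ c) * fps_const (fps_const d)) $ b $ a"
    by simp
  then show ?thesis by simp
qed

lemma coeff_Z: "(F * (mZ * embX e)) $ c $ b $ a
   = (if c = 0 then 0 else (\<Sum>i\<le>a. F $ (c-1) $ b $ i * e $ (a-i)))"
proof -
  have e1: "F * (mZ * embX e) = fps_X * (F * fps_const (fps_const e))"
    by (simp add: mZ_def embX_def mult_ac)
  show ?thesis
  proof (cases "c = 0")
    case True then show ?thesis unfolding e1 fps_X_mult_nth by simp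
  next
    case False
    have "(F * mZ * embX e) $ c $ b = F $ (c-1) $ b * e"
      unfolding mult.assoc e1 fps_X_mult_nth using False by simp
    then show ?thesis using False by (simp add: fps_mult_nth atMost_atLeast0 mult.assoc)
  qed
qed

lemma Q_coeff: "Qm m $ c $ b $ a = q m a b c"
proof (induction m arbitrary: a b c)
  case 0
  show ?case by (simp add: Qm_def q_def Sset_small wt_def)
next
  case (Suc m)
  show ?case
  proof (cases "m = 0")
    case True
    then have "{0<..<Suc m} = {}" by auto
    then show ?thesis using True by (simp add: Qm_def q_def Sset_small wt_def)
  next
    case False
    then have ins: "{0<..<Suc m} = insert m {0<..<m}" by auto
    have "Qm (Suc m) = Qm m + Qm m * (mY * K3 (1 / of_nat m)) + Qm m * (mZ * embX (ej m))"
      unfolding Qm_def ins by (simp add: wj_def algebra_simps)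
    then have "Qm (Suc m) $ c $ b $ a = q m a b c
       + (if b = 0 then 0 else q m a (b-1) c * (1 / of_nat m))
       + (if c = 0 then 0 else (\<Sum>i\<le>a. q m i b (c-1) * ej m $ (a-i)))"
      by (simp only: fps_add_nth coeff_Y coeff_Z Suc.IH)
    also have "\<dots> = q (Suc m) a b c"
      using False by (simp add: q_Suc ej_def divide_inverse)
    finally show ?thesis .
  qed
qed

definition MS :: "nat \<Rightarrow> nat \<Rightarrow> nat list set" where
  "MS N r = {ms. length ms = r \<and> sorted_wrt (<) ms \<and> set ms \<subseteq> {0<..<N}}"

lemma finite_MS: "finite (MS N r)"
proof -
  have "MS N r \<subseteq> {ms. set ms \<subseteq> {0..<N} \<and> length ms = r}" by (auto simp: MS_def)
  moreover have "finite {ms. set ms \<subseteq> {0..<N} \<and> length ms = r}"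
    by (intro finite_lists_length_eq) auto
  ultimately show ?thesis by (rule finite_subset)
qed

lemma finite_I0: "finite (I0 k r h)"
proof -
  have "I0 k r h \<subseteq> {ks. set ks \<subseteq> {0..k} \<and> length ks = r}"
    by (auto simp: I0_def dest: member_le_sum_list)
  moreover have "finite {ks. set ks \<subseteq> {0..k} \<and> length ks = r}"
    by (intro finite_lists_length_eq) auto
  ultimately show ?thesis by (rule finite_subset)
qed

lemma G0_set:
  "Sigma (I0 (a+b+2*c+2) (b+c+1) (c+1)) (\<lambda>ks. MS N (length ks))
   = (\<lambda>(j,i,p). (fst p @ [a-i+2], snd p @ [j])) ` (SIGMA j:{0<..<N}. SIGMA i:{..a}. Sset j i b c)"
  (is "?L = ?R")
proof (rule equalityI)
  show "?L \<subseteq> ?R"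
  proof
    fix x :: "nat list \<times> nat list" assume xL: "x \<in> ?L"
    obtain ks ms where x: "x = (ks, ms)" by fastforce
    have I: "ks \<in> I0 (a+b+2*c+2) (b+c+1) (c+1)" and M: "length ms = length ks" "sorted_wrt (<) ms"
      "set ms \<subseteq> {0<..<N}" using xL x by (auto simp: MS_def)
    from I have lk: "length ks = b+c+1" and pos: "\<forall>i<b+c+1. ks!i > 0" and lst: "ks!(b+c) > 1"
      and sm: "sum_list ks = a+b+2*c+2" and cd: "card {i. i < b+c+1 \<and> ks!i > 1} = c+1"
      unfolding I0_def by auto
    have hck: "hc ks = c+1" using cd lk by (simp add: hc_def length_filter_conv_card)
    have pos': "\<forall>k\<in>set ks. 0<k" using pos lk by (simp add: all_set_conv_all_nth)
    have V: "(ks, ms) \<in> V N" using M pos' by (simp add: V_def)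
    have "ks \<noteq> []" using lk by auto
    then obtain ks' ms' k j where e: "ks = ks' @ [k]" "ms = ms' @ [j]" "length ks' = length ms'"
      by (rule V_split[OF V])
    have "(ks' @ [k], ms' @ [j]) \<in> V N" using V unfolding e(1,2) .
    then have V': "(ks', ms') \<in> V j" and k0: "0 < k" and j: "0 < j" "j < N"
      unfolding app_V[OF e(3)] by auto
    have lk': "length ks' = b + c" using lk e by simp
    have k1: "1 < k" using lst lk' e(1) by (metis nth_append_length)
    have hc': "hc ks' = c" using hck e(1) k1 by (simp add: hc_app)
    have sm': "sum_list ks' + k = a+b+2*c+2" using sm e(1) by simp
    have pos'': "\<forall>x\<in>set ks'. 0 < x" using V' by (simp add: V_def)
    have ge: "length ks' + hc ks' \<le> sum_list ks'" using sum_ge[OF pos''] .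
    have ka: "k \<le> a + 2" using ge lk' hc' sm' by linarith
    define i where "i = a + 2 - k"
    have ia: "i \<le> a" "a - i + 2 = k" using ka k1 by (auto simp: i_def)
    have "(ks', ms') \<in> Sset j i b c"
      using V' lk' hc' sm' ka unfolding Sset_def i_def by auto
    then show "x \<in> ?R" unfolding x e(1,2) using ia j
      by (intro image_eqI[where x="(j,i,(ks',ms'))"]) auto
  qed
next
  show "?R \<subseteq> ?L"
  proof (rule image_subsetI)
    fix x assume x0: "x \<in> (SIGMA j:{0<..<N}. SIGMA i:{..a}. Sset j i b c)"
    obtain j i ks' ms' where xe: "x = (j, i, (ks', ms'))" by (cases x) fastforce
    have q: "(ks', ms') \<in> Sset j i b c" "i \<le> a" "0 < j" "j < N" using x0 xe by auto
    then have l: "length ks' = length ms'" by (simp add: Sset_def V_def)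
    have Vx: "(ks' @ [a-i+2], ms' @ [j]) \<in> V N" using app_V[OF l] q by (simp add: Sset_def)
    have lk': "length ks' = b + c" and hc': "hc ks' = c" and sm': "sum_list ks' = i + b + 2*c"
      using q by (auto simp: Sset_def)
    define ks where "ks = ks' @ [a-i+2]"
    have pos: "\<forall>k\<in>set ks. 0<k" using Vx by (simp add: V_def ks_def)
    have "ks \<in> I0 (a+b+2*c+2) (b+c+1) (c+1)"
      unfolding I0_def
    proof (intro CollectI conjI)
      show "length ks = b+c+1" using lk' by (simp add: ks_def)
      show "\<forall>i'<b+c+1. 0 < ks ! i'" using pos \<open>length ks = b+c+1\<close> by (simp add: all_set_conv_all_nth)
      show "1 < ks ! (b+c+1-1)" using lk' nth_append_length[of ks' "a-i+2" "[]"] by (simp add: ks_def)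
      show "sum_list ks = a+b+2*c+2" using sm' q(2) by (simp add: ks_def)
      show "card {i'. i' < b+c+1 \<and> 1 < ks ! i'} = c+1"
      proof -
        have "card {i'. i' < b+c+1 \<and> 1 < ks ! i'} = hc ks"
          unfolding hc_def length_filter_conv_card \<open>length ks = b+c+1\<close> ..
        also have "\<dots> = c + 1" unfolding ks_def hc_app hc' by simp
        finally show ?thesis .
      qed
    qed
    moreover have "ms' @ [j] \<in> MS N (length ks)" using Vx l lk' by (auto simp: V_def MS_def ks_def)
    ultimately show "(case x of (j,i,p) \<Rightarrow> (fst p @ [a-i+2], snd p @ [j])) \<in> ?L"
      unfolding xe by (simp add: ks_def)
  qed
qed

lemma G0_eq: "G0 N (a+b+2*c+2) (b+c+1) (c+1) z
  = (\<Sum>j\<in>{0<..<N}. cfac N j z * (\<Sum>i\<le>a. q j i b c / of_nat j ^ (a-i+2)))"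
proof -
  define f where "f = (\<lambda>(ks, ms). wt (ks, ms) * cfac N (last ms) z)"
  define T where "T = (SIGMA j:{0<..<N}. SIGMA i:{..a}. Sset j i b c)"
  define F where "F = (\<lambda>(j::nat,i::nat,p::nat list \<times> nat list). (fst p @ [a-i+2], snd p @ [j]))"
  have "G0 N (a+b+2*c+2) (b+c+1) (c+1) z
      = (\<Sum>ks\<in>I0 (a+b+2*c+2) (b+c+1) (c+1). \<Sum>ms\<in>MS N (length ks). f (ks, ms))"
    unfolding G0_def LiN_def MS_def f_def wt_def by simp
  also have "\<dots> = (\<Sum>x\<in>Sigma (I0 (a+b+2*c+2) (b+c+1) (c+1)) (\<lambda>ks. MS N (length ks)). f x)"
    using sum.Sigma[of "I0 (a+b+2*c+2) (b+c+1) (c+1)" "\<lambda>ks. MS N (length ks)" "\<lambda>ks ms. f (ks, ms)"]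
    by (simp add: finite_I0 finite_MS split_def)
  also have "\<dots> = (\<Sum>x\<in>F ` T. f x)" unfolding G0_set F_def T_def ..
  also have "\<dots> = (\<Sum>x\<in>T. f (F x))"
  proof (rule sum.reindex[unfolded o_def])
    show "inj_on F T" unfolding F_def T_def by (rule inj_onI) (auto simp: prod_eq_iff)
  qed
  also have "\<dots> = (\<Sum>j\<in>{0<..<N}. \<Sum>x\<in>(SIGMA i:{..a}. Sset j i b c). f (F (j, x)))"
    unfolding T_def
    using sum.Sigma[of "{0<..<N}" "\<lambda>j. SIGMA i:{..a}. Sset j i b c" "\<lambda>j x. f (F (j,x))"]
    by (simp add: finite_Sset split_def finite_SigmaI)
  also have "\<dots> = (\<Sum>j\<in>{0<..<N}. \<Sum>i\<le>a. \<Sum>p\<in>Sset j i b c. f (F (j, i, p)))"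
  proof (intro sum.cong refl)
    fix j show "(\<Sum>x\<in>(SIGMA i:{..a}. Sset j i b c). f (F (j, x))) = (\<Sum>i\<le>a. \<Sum>p\<in>Sset j i b c. f (F (j, i, p)))"
      using sum.Sigma[of "{..a}" "\<lambda>i. Sset j i b c" "\<lambda>i p. f (F (j,i,p))"]
      by (simp add: finite_Sset split_def)
  qed
  also have "\<dots> = (\<Sum>j\<in>{0<..<N}. \<Sum>i\<le>a. \<Sum>p\<in>Sset j i b c. cfac N j z * (wt p / of_nat j ^ (a-i+2)))"
    by (intro sum.cong refl) (auto simp: F_def f_def wt_app Sset_len)
  also have "\<dots> = (\<Sum>j\<in>{0<..<N}. cfac N j z * (\<Sum>i\<le>a. q j i b c / of_nat j ^ (a-i+2)))"
    by (simp add: q_def sum_distrib_left sum_divide_distrib)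
  finally show ?thesis .
qed

lemma Phi0_coeff: "Phi0 N z $ c $ b $ a = G0 N (a+b+2*c+2) (b+c+1) (c+1) z"
proof -
  have "{(k,r,h). k > 0 \<and> r > 0 \<and> h > 0 \<and> int k - int r - int h = int a
                  \<and> int r - int h = int b \<and> int h - 1 = int c} = {(a+b+2*c+2, b+c+1, c+1)}"
    by (auto simp: algebra_simps) 
  then show ?thesis unfolding Phi0_def by simp
qed

lemma coeff_E: "(F * embX e) $ c $ b $ a = (\<Sum>i\<le>a. F $ c $ b $ i * e $ (a-i))"
  unfolding embX_def fps_mult_right_const_nth by (simp add: fps_mult_nth atMost_atLeast0)

lemma Phi0_expand: "Phi0 N z = (\<Sum>j\<in>{0<..<N}. K3 (cfac N j z) * (Qm j * embX (ej j)))"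
proof (rule fps_ext, rule fps_ext, rule fps_ext)
  fix c b a
  show "Phi0 N z $ c $ b $ a = (\<Sum>j\<in>{0<..<N}. K3 (cfac N j z) * (Qm j * embX (ej j))) $ c $ b $ a"
    unfolding Phi0_coeff G0_eq fps_sum_nth fps_mult_left_const_nth coeff_E Q_coeff
    by (intro sum.cong refl arg_cong[where f="\<lambda>x. _ * x"]) (simp add: ej_def divide_inverse)
qed



theorem theorem5p2:
  fixes N :: nat and z :: complex
  assumes "N > 0" and "z \<noteq> 0"
  shows "(\<forall>k r h. G0 N k r h z \<noteq> 0 \<longrightarrow> r + h \<le> k \<and> h \<le> r)
     \<and> (mZ - mX * mY) * Phi0 N z = F21N N z - 1"
proof (intro conjI allI impI)
  fix k r h assume G: "G0 N k r h z \<noteq> 0"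
  then have "I0 k r h \<noteq> {}" by (auto simp: G0_def)
  then obtain ks where ks: "ks \<in> I0 k r h" by blast
  then have lk: "length ks = r" and pos: "\<forall>i<r. ks!i > 0" and sm: "sum_list ks = k"
    and cd: "card {i. i < r \<and> ks!i > 1} = h" unfolding I0_def by auto
  have hck: "hc ks = h" using cd lk by (simp add: hc_def length_filter_conv_card)
  have pos': "\<forall>k\<in>set ks. 0<k" using pos lk by (simp add: all_set_conv_all_nth)
  show "r + h \<le> k" using sum_ge[OF pos'] lk hck sm by simp
  show "h \<le> r" using hc_le[of ks] lk hck by simp
next
  have ins: "{..<N} = insert 0 {0<..<N}" using assms(1) by auto
  have t0: "ab_poch 0 * embX (inverse (pochhammer (1 - fps_X :: complex fps) 0 * fps_const (fact 0)) * fps_const (cfac N 0 z)) = 1"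
    unfolding ab_poch_def cfac_def embX_def by simp
  have t0': "ab_poch 0 * embX (fps_const (cfac N 0 z)) = 1"
    unfolding ab_poch_def cfac_def embX_def by simp
  have "F21N N z - 1 = (\<Sum>m\<in>{0<..<N}. ab_poch m *
      embX (inverse (pochhammer (1 - fps_X) m * fps_const (fact m)) * fps_const (cfac N m z)))"
    unfolding F21N_def ins by (simp add: t0 t0')
  also have "\<dots> = (\<Sum>m\<in>{0<..<N}. K3 (cfac N m z) * ((mZ - mX * mY) * (Qm m * embX (ej m))))"
  proof (rule sum.cong[OF refl])
    fix m assume "m \<in> {0<..<N}"
    then have m: "0 < m" by simp
    have "ab_poch m * embX (inverse (pochhammer (1 - fps_X) m * fps_const (fact m)) * fps_const (cfac N m z))
       = (ab_poch m * embX (inverse (pochhammer (1 - fps_X) m * fps_const (fact m)))) * K3 (cfac N m z)"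
      by (simp only: embX_mult embX_const mult.assoc)
    also have "\<dots> = ((mZ - mX * mY) * (Qm m * embX (ej m))) * K3 (cfac N m z)"
      by (simp only: alg_main[OF m])
    finally show "ab_poch m * embX (inverse (pochhammer (1 - fps_X) m * fps_const (fact m)) * fps_const (cfac N m z))
       = K3 (cfac N m z) * ((mZ - mX * mY) * (Qm m * embX (ej m)))" by (simp only: mult.commute)
  qed
  also have "\<dots> = (mZ - mX * mY) * Phi0 N z"
    unfolding Phi0_expand sum_distrib_left by (simp add: mult_ac)
  finally show "(mZ - mX * mY) * Phi0 N z = F21N N z - 1" ..
qed

end
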